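(* Let $X$ be a Banach space with $\dim X>1$, $x\in X$ and $T\in L(X)$. If there is a non-zero $f\in X^*$ such that $f(T^nx)=o(\|T^nx\|)$ as $n\to\infty$, then $x$ is not a supercyclic vector for $T$.
   Context: $x$ is a supercyclic vector for $T$ if $\{zT^nx:z\in\mathbb{K},n\in\mathbb{Z}_+\}$ is norm dense in $X$, where $\mathbb{K}\in\{\mathbb{R},\mathbb{C}\}$ is the scalar field. *)

theory Defs
  imports "HOL-Analysis.Analysis" "HOL-Library.Landau_Symbols"
begin

definition supercyclic_real :: "('a::real_normed_vector \<Rightarrow> 'a) \<Rightarrow> 'a \<Rightarrow> bool" where
  "supercyclic_real T x \<longleftrightarrow> closure {c *\<^sub>R (T ^^ n) x | c n. True} = UNIV"

text \<open>HOL has no class of complex normed spaces, so a complex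
  normed space is modelled as a real normed space together with a complex scalar
  multiplication extending the real one and compatible with the norm.\<close>
definition complex_scaling :: "(complex \<Rightarrow> 'a::real_normed_vector \<Rightarrow> 'a) \<Rightarrow> bool" where
  "complex_scaling sc \<longleftrightarrow>
     (\<forall>r y. sc (complex_of_real r) y = r *\<^sub>R y) \<and>
     (\<forall>a b y. sc (a * b) y = sc a (sc b y)) \<and>
     (\<forall>a b y. sc (a + b) y = sc a y + sc b y) \<and>
     (\<forall>a y z. sc a (y + z) = sc a y + sc a z) \<and>
     (\<forall>a y. norm (sc a y) = cmod a * norm y)"

definition supercyclic_complex ::
  "(complex \<Rightarrow> 'a::real_normed_vector \<Rightarrow> 'a) \<Rightarrow> ('a \<Rightarrow> 'a) \<Rightarrow> 'a \<Rightarrow> bool" where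
  "supercyclic_complex sc T x \<longleftrightarrow> closure {sc z ((T ^^ n) x) | z n. True} = UNIV"

end

theory Submission imports Defs begin

lemma subspace_interior_UNIV:
  fixes S :: "'a::real_normed_vector set"
  assumes S: "subspace S" and i: "interior S \<noteq> {}"
  shows "S = UNIV"
proof -
  obtain z where z: "z \<in> interior S" using i by auto
  then obtain r where r: "r > 0" "ball z r \<subseteq> S"
    using mem_interior by blast
  have zS: "z \<in> S" using r by auto
  have "y \<in> S" for y
  proof (cases "y = 0")
    case True then show ?thesis using S subspace_0 by blast
  next
    case False
    define t where "t = r / (2 * norm y)"
    have t: "t > 0" using False r by (simp add: t_def)
    have "norm (t *\<^sub>R y) = r / 2" using False r by (simp add: t_def)
    then have "z + t *\<^sub>R y \<in> ball z r" using r by (simp add: dist_norm)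
    then have "z + t *\<^sub>R y \<in> S" using r by auto
    then have "(z + t *\<^sub>R y) - z \<in> S" using S zS subspace_diff by blast
    then have "t *\<^sub>R y \<in> S" by simp
    then have "(1/t) *\<^sub>R (t *\<^sub>R y) \<in> S" using S subspace_scale by blast
    then show ?thesis using t by simp
  qed
  then show ?thesis by auto
qed

lemma interior_finite_Union_empty:
  fixes L :: "nat \<Rightarrow> 'a::topological_space set"
  assumes "\<And>n. closed (L n)" "\<And>n. interior (L n) = {}"
  shows "interior (\<Union>n<N. L n) = {}"
proof (induction N)
  case 0 then show ?case by simp
next
  case (Suc N)
  have "(\<Union>n<Suc N. L n) = L N \<union> (\<Union>n<N. L n)" by (auto simp: lessThan_Suc)
  then show ?case using interior_closed_Un_empty_interior[OF assms(1) Suc.IH] assms(2) by simp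
qed

lemma key:
  fixes S :: "'a::real_normed_vector set" and L :: "nat \<Rightarrow> 'a set"
  assumes "closure S = UNIV" "open U" "U \<noteq> {}" "U \<inter> S \<subseteq> (\<Union>n<N. L n)"
    "\<And>n. closed (L n)" "\<And>n. subspace (L n)" "\<And>n. L n \<noteq> UNIV"
  shows False
proof -
  have int: "\<And>n. interior (L n) = {}" using assms(6,7) subspace_interior_UNIV by blast
  have cl: "closed (\<Union>n<N. L n)" using assms(5) by (intro closed_UN) auto
  have "U \<subseteq> closure (U \<inter> S)" using open_Int_closure_subset[OF assms(2), of S] assms(1) by simp
  also have "\<dots> \<subseteq> (\<Union>n<N. L n)" using closure_minimal[OF assms(4) cl] .
  finally have "U \<subseteq> interior (\<Union>n<N. L n)" using assms(2) interior_maximal by blast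
  then show False using interior_finite_Union_empty[OF assms(5) int] assms(3) by auto
qed

lemma closed_range_iso:
  fixes h :: "'c::{real_normed_vector,complete_space} \<Rightarrow> 'a::real_normed_vector"
  assumes "bounded_linear h" "e > 0" "\<And>c. norm (h c) \<ge> e * norm c"
  shows "closed (range h)"
  by (rule complete_imp_closed, rule complete_isometric_image[OF assms(2) subspace_UNIV assms(1)])
     (use assms(3) complete_UNIV in auto)

lemma real_part:
  fixes T :: "'a::banach \<Rightarrow> 'a" and x :: 'a and f :: "'a \<Rightarrow> real"
  assumes nl: "\<not> (\<exists>v. span {v} = (UNIV :: 'a set))" and bT: "bounded_linear T"
    and bf: "bounded_linear f" and fy: "f y \<noteq> 0"
    and o: "(\<lambda>n. f ((T ^^ n) x)) \<in> o[sequentially](\<lambda>n. norm ((T ^^ n) x))"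
  shows "\<not> supercyclic_real T x"
proof
  assume sc: "supercyclic_real T x"
  interpret f: bounded_linear f by fact
  have y0: "y \<noteq> 0" using fy by auto
  define e where "e = \<bar>f y\<bar> / (2 * norm y)"
  have e: "e > 0" using fy y0 by (simp add: e_def)
  define U where "U = {z. e * norm z < \<bar>f z\<bar>}"
  have oU: "open U" unfolding U_def
    by (intro open_Collect_less continuous_intros f.continuous_on continuous_on_id)
  have "y \<in> U" using fy y0 by (simp add: U_def e_def)
  then have Une: "U \<noteq> {}" by auto
  obtain N where N: "\<And>n. n \<ge> N \<Longrightarrow> \<bar>f ((T ^^ n) x)\<bar> \<le> e * norm ((T ^^ n) x)"
    using landau_o.smallD[OF o e] unfolding eventually_sequentially by auto
  define S where "S = {c *\<^sub>R (T ^^ n) x | c n. True}"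
  define L where "L = (\<lambda>n. span {(T ^^ n) x})"
  have sub: "U \<inter> S \<subseteq> (\<Union>n<N. L n)"
  proof
    fix w assume w: "w \<in> U \<inter> S"
    then obtain c n where wc: "w = c *\<^sub>R (T ^^ n) x" by (auto simp: S_def)
    have "n < N"
    proof (rule ccontr)
      assume "\<not> n < N"
      then have "\<bar>f ((T ^^ n) x)\<bar> \<le> e * norm ((T ^^ n) x)" using N by auto
      then have "\<bar>c\<bar> * \<bar>f ((T ^^ n) x)\<bar> \<le> \<bar>c\<bar> * (e * norm ((T ^^ n) x))"
        by (simp add: mult_left_mono)
      then have "\<bar>f w\<bar> \<le> e * norm w" by (simp add: wc f.scaleR abs_mult algebra_simps)
      then show False using w by (simp add: U_def)
    qed
    then show "w \<in> (\<Union>n<N. L n)" using wc by (auto simp: L_def intro: span_mul span_base)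
  qed
  have cl: "closed (L n)" for n
  proof (cases "(T ^^ n) x = 0")
    case True then show ?thesis by (simp add: L_def)
  next
    case False
    have "closed (range (\<lambda>k::real. k *\<^sub>R (T ^^ n) x))"
      by (rule closed_range_iso[where e="norm ((T ^^ n) x)"])
         (use False in \<open>auto intro: bounded_linear_scaleR_left\<close>)
    then show ?thesis by (simp add: L_def span_singleton)
  qed
  show False
    by (rule key[OF _ oU Une sub cl])
       (use sc nl in \<open>auto simp: supercyclic_real_def S_def L_def\<close>)
qed

lemma complex_part:
  fixes sc :: "complex \<Rightarrow> 'b::banach \<Rightarrow> 'b" and T :: "'b \<Rightarrow> 'b" and x :: 'b and f :: "'b \<Rightarrow> complex"
  assumes cs: "complex_scaling sc" and nl: "\<not> (\<exists>v. \<forall>y. \<exists>c. y = sc c v)"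
    and bf: "bounded_linear f" and fsc: "\<forall>a y. f (sc a y) = a * f y" and fy: "f y \<noteq> 0"
    and o: "(\<lambda>n. f ((T ^^ n) x)) \<in> o[sequentially](\<lambda>n. norm ((T ^^ n) x))"
  shows "\<not> supercyclic_complex sc T x"
proof
  assume scy: "supercyclic_complex sc T x"
  interpret f: bounded_linear f by fact
  have sR: "\<And>r y. sc (complex_of_real r) y = r *\<^sub>R y"
    and sM: "\<And>a b y. sc (a * b) y = sc a (sc b y)"
    and sA: "\<And>a b y. sc (a + b) y = sc a y + sc b y"
    and sN: "\<And>a y. norm (sc a y) = cmod a * norm y"
    using cs by (auto simp: complex_scaling_def)
  have y0: "y \<noteq> 0" using fy by auto
  define e where "e = cmod (f y) / (2 * norm y)"
  have e: "e > 0" using fy y0 by (simp add: e_def)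
  define U where "U = {z. e * norm z < cmod (f z)}"
  have oU: "open U" unfolding U_def
    by (intro open_Collect_less continuous_intros f.continuous_on continuous_on_id)
  have "y \<in> U" using fy y0 by (simp add: U_def e_def)
  then have Une: "U \<noteq> {}" by auto
  obtain N where N: "\<And>n. n \<ge> N \<Longrightarrow> cmod (f ((T ^^ n) x)) \<le> e * norm ((T ^^ n) x)"
    using landau_o.smallD[OF o e] unfolding eventually_sequentially by auto
  define S where "S = {sc c ((T ^^ n) x) | c n. True}"
  define L where "L = (\<lambda>n. range (\<lambda>c. sc c ((T ^^ n) x)))"
  have sub: "U \<inter> S \<subseteq> (\<Union>n<N. L n)"
  proof
    fix w assume w: "w \<in> U \<inter> S"
    then obtain c n where wc: "w = sc c ((T ^^ n) x)" by (auto simp: S_def)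
    have "n < N"
    proof (rule ccontr)
      assume "\<not> n < N"
      then have "cmod (f ((T ^^ n) x)) \<le> e * norm ((T ^^ n) x)" using N by auto
      then have "cmod c * cmod (f ((T ^^ n) x)) \<le> cmod c * (e * norm ((T ^^ n) x))"
        by (simp add: mult_left_mono)
      then have "cmod (f w) \<le> e * norm w" by (simp add: wc fsc sN norm_mult algebra_simps)
      then show False using w by (simp add: U_def)
    qed
    then show "w \<in> (\<Union>n<N. L n)" using wc by (auto simp: L_def)
  qed
  have bl: "bounded_linear (\<lambda>c. sc c v)" for v
  proof (rule bounded_linear_intro[where K="norm v"])
    show "sc (a + b) v = sc a v + sc b v" for a b by (rule sA)
    show "sc (r *\<^sub>R a) v = r *\<^sub>R sc a v" for r a
      by (simp add: scaleR_conv_of_real sM sR)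
    show "norm (sc a v) \<le> norm a * norm v" for a by (simp add: sN)
  qed
  have s0: "sc 0 v = 0" for v using sR[of 0 v] by simp
  have cl: "closed (L n)" for n
  proof (cases "(T ^^ n) x = 0")
    case True
    have "sc c 0 = 0" for c using sN[of c 0] by simp
    then have "L n = {0}" using True s0 by (auto simp: L_def image_def)
    then show ?thesis by simp
  next
    case False
    show ?thesis unfolding L_def
      by (rule closed_range_iso[where e="norm ((T ^^ n) x)", OF bl])
         (use False in \<open>auto simp: sN\<close>)
  qed
  have ss: "subspace (L n)" for n
    unfolding subspace_def L_def
  proof (intro conjI ballI allI)
    show "0 \<in> range (\<lambda>c. sc c ((T ^^ n) x))" using s0 by (metis rangeI)
    fix a b assume "a \<in> range (\<lambda>c. sc c ((T ^^ n) x))" "b \<in> range (\<lambda>c. sc c ((T ^^ n) x))"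
    then show "a + b \<in> range (\<lambda>c. sc c ((T ^^ n) x))" by (auto simp flip: sA)
  next
    fix r :: real and a assume "a \<in> range (\<lambda>c. sc c ((T ^^ n) x))"
    then show "r *\<^sub>R a \<in> range (\<lambda>c. sc c ((T ^^ n) x))" by (auto simp flip: sR sM)
  qed
  have ne: "L n \<noteq> UNIV" for n
  proof
    assume "L n = UNIV"
    then have "\<forall>z. \<exists>c. z = sc c ((T ^^ n) x)" unfolding L_def by (metis UNIV_I image_iff)
    then show False using nl by blast
  qed
  show False
    by (rule key[OF _ oU Une sub cl ss ne])
       (use scy in \<open>auto simp: supercyclic_complex_def S_def\<close>)
qed

theorem lemma2p2:
  shows
  "(\<forall>(T :: 'a::banach \<Rightarrow> 'a) (x :: 'a) (f :: 'a \<Rightarrow> real).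
      \<not> (\<exists>v. span {v} = (UNIV :: 'a set)) \<and>
      bounded_linear T \<and> bounded_linear f \<and> (\<exists>y. f y \<noteq> 0) \<and>
      (\<lambda>n. f ((T ^^ n) x)) \<in> o[sequentially](\<lambda>n. norm ((T ^^ n) x))
      \<longrightarrow> \<not> supercyclic_real T x)
   \<and>
   (\<forall>(sc :: complex \<Rightarrow> 'b::banach \<Rightarrow> 'b) (T :: 'b \<Rightarrow> 'b) (x :: 'b) (f :: 'b \<Rightarrow> complex).
      complex_scaling sc \<and>
      \<not> (\<exists>v. \<forall>y. \<exists>c. y = sc c v) \<and>
      bounded_linear T \<and> (\<forall>a y. T (sc a y) = sc a (T y)) \<and>
      bounded_linear f \<and> (\<forall>a y. f (sc a y) = a * f y) \<and> (\<exists>y. f y \<noteq> 0) \<and>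
      (\<lambda>n. f ((T ^^ n) x)) \<in> o[sequentially](\<lambda>n. norm ((T ^^ n) x))
      \<longrightarrow> \<not> supercyclic_complex sc T x)"
  apply (intro conjI allI impI)
   apply (elim conjE exE)
   apply (rule real_part; assumption)
  apply (elim conjE exE)
  apply (rule complex_part; assumption)
  done

end
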